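(* Let $\mathbb{F}$ be a field and $A$ a matrix over $\mathbb{F}$ of dual tree-depth at most $d$. Then there is a $(d+3,\mathbb{F})$-matrix-tree $T(A)$ such that $A=A(T(A))$ (identifying the rows of $A$ with the nodes labelled $L_R$ and the columns with the nodes labelled $L_C$).
   Context: The depth of a rooted tree is the number of edges on a longest root-to-leaf path; a rooted forest's depth is the maximum depth of its components. An elimination forest of a graph $G$ is a rooted forest $F$ with $V(F)=V(G)$ such that every edge of $G$ joins a vertex to one of its ancestors in $F$; the tree-depth $\mathrm{td}(G)$ is the minimum of $\mathrm{depth}(F)+1$ over elimination forests. The dual graph $G_D(A)$ has the rows of $A$ as vertices, two rows adjacent iff some column has non-zero entries in both; the dual tree-depth of $A$ is $\mathrm{td}(G_D(A))$. A $(d,\mathbb{F})$-matrix-tree is a rooted tree of depth at most $d$ with unary labels from $\{L_R,L_C\}\cup\{L_{i,\alpha}: i\in\{0,\dots,d\},\alpha\in\mathbb{F}\}$ such that: every node labelled $L_C$ is a leaf; every other non-root node is labelled $L_R$; and each $L_C$-leaf at distance $k\le d$ from the root carries, for each $i\in\{0,\dots,k-1\}$, exactly one label $L_{i,\alpha}$. The matrix $A(T)$ has rows the $L_R$-nodes, columns the $L_C$-nodes, and entry at $(r,c)$ equal to $0$ if $r$ is not an ancestor of $c$, and equal to the unique $\alpha$ with $c$ labelled $L_{i,\alpha}$ if $r$ is an ancestor of $c$ at distance $i$ from the root. *)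

theory Defs
  imports Main
begin

text \<open>A rooted forest on a vertex set V is given by a parent map p (None = root).
  anc p u v means: u is a proper ancestor of v.\<close>

definition anc :: "('v \<Rightarrow> 'v option) \<Rightarrow> 'v \<Rightarrow> 'v \<Rightarrow> bool" where
  "anc p u v \<longleftrightarrow> (v, u) \<in> {(x, y). p x = Some y}\<^sup>+"

text \<open>Distance of a vertex from the root of its component = number of proper ancestors.\<close>
definition node_dist :: "('v \<Rightarrow> 'v option) \<Rightarrow> 'v \<Rightarrow> nat" where
  "node_dist p v = card {u. anc p u v}"

definition rooted_forest :: "'v set \<Rightarrow> ('v \<Rightarrow> 'v option) \<Rightarrow> bool" where
  "rooted_forest V p \<longleftrightarrow> finite V
     \<and> (\<forall>v\<in>V. \<forall>u. p v = Some u \<longrightarrow> u \<in> V)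
     \<and> (\<forall>v\<in>V. \<not> anc p v v)"

definition forest_depth_le :: "'v set \<Rightarrow> ('v \<Rightarrow> 'v option) \<Rightarrow> nat \<Rightarrow> bool" where
  "forest_depth_le V p k \<longleftrightarrow> (\<forall>v\<in>V. node_dist p v \<le> k)"

definition dual_adj :: "'r set \<Rightarrow> 'c set \<Rightarrow> ('r \<Rightarrow> 'c \<Rightarrow> 'a::zero) \<Rightarrow> 'r \<Rightarrow> 'r \<Rightarrow> bool" where
  "dual_adj R C A r s \<longleftrightarrow> r \<in> R \<and> s \<in> R \<and> r \<noteq> s \<and> (\<exists>c\<in>C. A r c \<noteq> 0 \<and> A s c \<noteq> 0)"

definition elimination_forest ::
  "'r set \<Rightarrow> 'c set \<Rightarrow> ('r \<Rightarrow> 'c \<Rightarrow> 'a::zero) \<Rightarrow> ('r \<Rightarrow> 'r option) \<Rightarrow> bool" where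
  "elimination_forest R C A p \<longleftrightarrow> rooted_forest R p
     \<and> (\<forall>r s. dual_adj R C A r s \<longrightarrow> anc p r s \<or> anc p s r)"

definition dual_td_le :: "'r set \<Rightarrow> 'c set \<Rightarrow> ('r \<Rightarrow> 'c \<Rightarrow> 'a::zero) \<Rightarrow> nat \<Rightarrow> bool" where
  "dual_td_le R C A d \<longleftrightarrow>
     (\<exists>p k. elimination_forest R C A p \<and> forest_depth_le R p k \<and> k + 1 \<le> d)"

datatype 'a mt_label = LR | LC | LI nat 'a

definition is_leaf :: "'n set \<Rightarrow> ('n \<Rightarrow> 'n option) \<Rightarrow> 'n \<Rightarrow> bool" where
  "is_leaf N p v \<longleftrightarrow> (\<forall>w\<in>N. p w \<noteq> Some v)"

definition matrix_tree ::
  "nat \<Rightarrow> 'n set \<Rightarrow> 'n \<Rightarrow> ('n \<Rightarrow> 'n option) \<Rightarrow> ('n \<Rightarrow> 'a mt_label set) \<Rightarrow> bool" where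
  "matrix_tree d N rt p lab \<longleftrightarrow>
     finite N \<and> rt \<in> N \<and> p rt = None
     \<and> (\<forall>v\<in>N. v \<noteq> rt \<longrightarrow> (\<exists>u. p v = Some u \<and> u \<in> N))
     \<and> (\<forall>v\<in>N. \<not> anc p v v)
     \<and> (\<forall>v\<in>N. node_dist p v \<le> d)
     \<and> (\<forall>v\<in>N. LC \<in> lab v \<longrightarrow> is_leaf N p v)
     \<and> (\<forall>v\<in>N. v \<noteq> rt \<and> LC \<notin> lab v \<longrightarrow> LR \<in> lab v)
     \<and> (\<forall>v\<in>N. LC \<in> lab v \<longrightarrow> (\<forall>i < node_dist p v. \<exists>!\<alpha>. LI i \<alpha> \<in> lab v))"

definition mt_entry ::
  "('n \<Rightarrow> 'n option) \<Rightarrow> ('n \<Rightarrow> 'a::zero mt_label set) \<Rightarrow> 'n \<Rightarrow> 'n \<Rightarrow> 'a" where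
  "mt_entry p lab r c = (if anc p r c then (THE \<alpha>. LI (node_dist p r) \<alpha> \<in> lab c) else 0)"

end

theory Submission
  imports Defs
begin

lemma anc_induct[consumes 1, case_names base step]:
  assumes "anc p u v"
    and "\<And>v. p v = Some u \<Longrightarrow> P v"
    and "\<And>v w. p v = Some w \<Longrightarrow> anc p u w \<Longrightarrow> P w \<Longrightarrow> P v"
  shows "P v"
  using assms(1) unfolding anc_def
proof (induction rule: converse_trancl_induct)
  case (base y) then show ?case using assms(2) by simp
next
  case (step y z) then show ?case using assms(3) by (simp add: anc_def)
qed

lemma anc_step: "anc p u v \<longleftrightarrow> (\<exists>w. p v = Some w \<and> (w = u \<or> anc p u w))"
proof
  assume "anc p u v"
  then show "\<exists>w. p v = Some w \<and> (w = u \<or> anc p u w)"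
    by (induction rule: anc_induct) auto
next
  assume "\<exists>w. p v = Some w \<and> (w = u \<or> anc p u w)"
  then show "anc p u v" unfolding anc_def
    by (auto intro: trancl_into_trancl2 r_into_trancl)
qed

lemma anc_None: "p v = None \<Longrightarrow> \<not> anc p u v"
  by (subst anc_step) simp

lemma anc_trans: "anc p a b \<Longrightarrow> anc p b c \<Longrightarrow> anc p a c"
  unfolding anc_def by (meson trancl_trans)

lemma anc_chain:
  assumes "anc p a v" "anc p b v"
  shows "a = b \<or> anc p a b \<or> anc p b a"
  using assms
proof (induction arbitrary: b rule: anc_induct)
  case (base v)
  then show ?case using anc_step[of p b v] by auto
next
  case (step v w)
  then have "w = b \<or> anc p b w" using anc_step[of p b v] by auto
  then show ?case using step by auto
qed

lemma anc_closed:
  assumes "\<forall>v\<in>V. \<forall>u. p v = Some u \<longrightarrow> u \<in> V" "anc p u v" "v \<in> V"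
  shows "u \<in> V"
  using assms(2,3) by (induction rule: anc_induct) (use assms(1) in auto)

lemma nd_less:
  assumes "rooted_forest V p" "b \<in> V" "anc p a b"
  shows "node_dist p a < node_dist p b"
proof -
  have clos: "\<forall>v\<in>V. \<forall>u. p v = Some u \<longrightarrow> u \<in> V" using assms(1) unfolding rooted_forest_def by blast
  have sub: "{u. anc p u b} \<subseteq> V"
  proof
    fix u assume "u \<in> {u. anc p u b}"
    then show "u \<in> V" using anc_closed[OF clos _ assms(2)] by blast
  qed
  have fin: "finite {u. anc p u b}" using finite_subset[OF sub] assms(1) unfolding rooted_forest_def by blast
  have aV: "a \<in> V" using sub assms(3) by blast
  have s1: "{u. anc p u a} \<subseteq> {u. anc p u b}" using anc_trans[OF _ assms(3)] by blast
  have s2: "a \<notin> {u. anc p u a}" using aV assms(1) unfolding rooted_forest_def by blast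
  have s3: "a \<in> {u. anc p u b}" using assms(3) by simp
  have "{u. anc p u a} \<subset> {u. anc p u b}" using s1 s2 s3 by blast
  then show ?thesis unfolding node_dist_def using fin psubset_card_mono by blast
qed

lemma relabel:
  fixes N :: "'v set" and p :: "'v \<Rightarrow> 'v option" and lab :: "'v \<Rightarrow> 'a::zero mt_label set"
  assumes mt: "matrix_tree d N rt p lab"
    and rho: "bij_betw \<rho> R {v \<in> N. LR \<in> lab v}" and gam: "bij_betw \<gamma> C {v\<in>N. LC \<in> lab v}"
    and ent: "\<forall>r\<in>R. \<forall>c\<in>C. A r c = mt_entry p lab (\<rho> r) (\<gamma> c)"
  shows "\<exists>(N' :: nat set) rt' p' (lab' :: nat \<Rightarrow> 'a mt_label set) \<rho>' \<gamma>'.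
           matrix_tree d N' rt' p' lab'
         \<and> bij_betw \<rho>' R {v \<in> N'. LR \<in> lab' v}
         \<and> bij_betw \<gamma>' C {v \<in> N'. LC \<in> lab' v}
         \<and> (\<forall>r\<in>R. \<forall>c\<in>C. A r c = mt_entry p' lab' (\<rho>' r) (\<gamma>' c))"
proof -
  have finN: "finite N" and rtN: "rt \<in> N" and prt: "p rt = None"
    and par: "\<forall>v\<in>N. v \<noteq> rt \<longrightarrow> (\<exists>u. p v = Some u \<and> u \<in> N)"
    and acyc: "\<forall>v\<in>N. \<not> anc p v v"
    and dist: "\<forall>v\<in>N. node_dist p v \<le> d"
    and leaf: "\<forall>v\<in>N. LC \<in> lab v \<longrightarrow> is_leaf N p v"
    and lr: "\<forall>v\<in>N. v \<noteq> rt \<and> LC \<notin> lab v \<longrightarrow> LR \<in> lab v"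
    and li: "\<forall>v\<in>N. LC \<in> lab v \<longrightarrow> (\<forall>i < node_dist p v. \<exists>!\<alpha>. LI i \<alpha> \<in> lab v)"
    using mt unfolding matrix_tree_def by blast+
  have clos: "\<forall>v\<in>N. \<forall>u. p v = Some u \<longrightarrow> u \<in> N"
    using par prt by (metis option.inject option.simps(3))
  obtain g :: "'v \<Rightarrow> nat" where g: "inj_on g N" using finite_imp_inj_to_nat_seg[OF finN] by blast
  define h where "h = inv_into N g"
  have hg: "\<And>v. v\<in>N \<Longrightarrow> h (g v) = v" using g by (simp add: h_def)
  define p' where "p' = (\<lambda>n. if n \<in> g ` N then map_option g (p (h n)) else None)"
  define lab' where "lab' = (\<lambda>n. lab (h n))"
  have p'g: "\<And>v. v\<in>N \<Longrightarrow> p' (g v) = map_option g (p v)" using hg by (auto simp: p'_def)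
  have fw: "u \<in> N \<and> (g v, g u) \<in> {(x,y). p' x = Some y}\<^sup>+"
    if "(v,u) \<in> {(x,y). p x = Some y}\<^sup>+" "v \<in> N" for v u
    using that
  proof (induction rule: trancl_induct)
    case (base y)
    then show ?case using clos p'g by (auto intro: r_into_trancl)
  next
    case (step y z)
    then have "y \<in> N" "z \<in> N" using clos by auto
    then show ?case using step p'g by (auto intro: trancl_into_trancl)
  qed
  have bw: "y \<in> g ` N \<and> (h x, h y) \<in> {(x,y). p x = Some y}\<^sup>+"
    if "(x,y) \<in> {(x,y). p' x = Some y}\<^sup>+" "x \<in> g ` N" for x y
    using that
  proof (induction rule: trancl_induct)
    case (base y)
    then obtain v where v: "v \<in> N" "x = g v" by auto
    with base obtain u where u: "p v = Some u" "y = g u" using p'g by auto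
    then have "u \<in> N" using clos v by auto
    then show ?case using u v hg by (auto intro: r_into_trancl)
  next
    case (step y z)
    then obtain v where v: "v \<in> N" "y = g v" by auto
    with step obtain u where u: "p v = Some u" "z = g u" using p'g by auto
    then have "u \<in> N" using clos v by auto
    then show ?case using u v hg step by (auto intro: trancl_into_trancl)
  qed
  have ancg: "anc p' (g u) (g v) \<longleftrightarrow> anc p u v" if "u \<in> N" "v \<in> N" for u v
  proof
    assume "anc p' (g u) (g v)"
    then have "(h (g v), h (g u)) \<in> {(x,y). p x = Some y}\<^sup>+"
      using bw[of "g v" "g u"] that unfolding anc_def by blast
    then show "anc p u v" using hg that unfolding anc_def by simp
  next
    assume "anc p u v"
    then show "anc p' (g u) (g v)" using fw[of v u] that unfolding anc_def by blast
  qed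
  have ancs: "{x. anc p' x (g v)} = g ` {u. anc p u v}" if "v \<in> N" for v
  proof
    show "{x. anc p' x (g v)} \<subseteq> g ` {u. anc p u v}"
    proof
      fix x assume "x \<in> {x. anc p' x (g v)}"
      then have "x \<in> g ` N" using bw[of "g v" x] that unfolding anc_def by auto
      then obtain u where "u \<in> N" "x = g u" by auto
      then show "x \<in> g ` {u. anc p u v}" using ancg that \<open>x \<in> {x. anc p' x (g v)}\<close> by auto
    qed
    show "g ` {u. anc p u v} \<subseteq> {x. anc p' x (g v)}"
      using ancg that anc_closed[OF clos] by auto
  qed
  have ndg: "node_dist p' (g v) = node_dist p v" if "v \<in> N" for v
  proof -
    have "{u. anc p u v} \<subseteq> N" using anc_closed[OF clos] that by auto
    then have "inj_on g {u. anc p u v}" using g inj_on_subset by blast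
    then show ?thesis unfolding node_dist_def using ancs[OF that] card_image by metis
  qed
  have labg: "\<And>v. v \<in> N \<Longrightarrow> lab' (g v) = lab v" using hg by (simp add: lab'_def)
  have MT: "matrix_tree d (g ` N) (g rt) p' lab'"
    unfolding matrix_tree_def
  proof (intro conjI)
    show "finite (g ` N)" using finN by simp
    show "g rt \<in> g ` N" using rtN by simp
    show "p' (g rt) = None" using p'g rtN prt by simp
    show "\<forall>v\<in>g ` N. v \<noteq> g rt \<longrightarrow> (\<exists>u. p' v = Some u \<and> u \<in> g ` N)"
    proof (intro ballI impI)
      fix v assume v: "v \<in> g ` N" "v \<noteq> g rt"
      then obtain w where w: "w \<in> N" "v = g w" by blast
      then have "w \<noteq> rt" using v by blast
      then obtain u where u: "p w = Some u" "u \<in> N" using par w by blast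
      have "p' v = Some (g u)" using p'g[OF w(1)] u w by simp
      then show "\<exists>u. p' v = Some u \<and> u \<in> g ` N" using u by blast
    qed
    show "\<forall>v\<in>g ` N. \<not> anc p' v v"
    proof
      fix v assume "v \<in> g ` N"
      then obtain w where w: "w \<in> N" "v = g w" by blast
      then show "\<not> anc p' v v" using acyc ancg[OF w(1) w(1)] by simp
    qed
    show "\<forall>v\<in>g ` N. node_dist p' v \<le> d"
    proof
      fix v assume "v \<in> g ` N"
      then obtain w where w: "w \<in> N" "v = g w" by blast
      then show "node_dist p' v \<le> d" using dist ndg[OF w(1)] by simp
    qed
    show "\<forall>v\<in>g ` N. LC \<in> lab' v \<longrightarrow> is_leaf (g ` N) p' v"
    proof (intro ballI impI)
      fix v assume v: "v \<in> g ` N" "LC \<in> lab' v"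
      then obtain w where w: "w \<in> N" "v = g w" by auto
      then have lw: "is_leaf N p w" using leaf v labg by auto
      show "is_leaf (g ` N) p' v" unfolding is_leaf_def
      proof
        fix x assume "x \<in> g ` N"
        then obtain y where y: "y \<in> N" "x = g y" by auto
        show "p' x \<noteq> Some v"
        proof
          assume "p' x = Some v"
          then obtain u where u: "p y = Some u" "g u = g w" using y w p'g by auto
          then have "u \<in> N" using clos y by auto
          then have "u = w" using u w g inj_on_eq_iff by metis
          then show False using lw y u unfolding is_leaf_def by auto
        qed
      qed
    qed
    show "\<forall>v\<in>g ` N. v \<noteq> g rt \<and> LC \<notin> lab' v \<longrightarrow> LR \<in> lab' v"
    proof (intro ballI impI)
      fix v assume v: "v \<in> g ` N" "v \<noteq> g rt \<and> LC \<notin> lab' v"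
      then obtain w where w: "w \<in> N" "v = g w" by blast
      then show "LR \<in> lab' v" using lr v labg[OF w(1)] by auto
    qed
    show "\<forall>v\<in>g ` N. LC \<in> lab' v \<longrightarrow> (\<forall>i<node_dist p' v. \<exists>!\<alpha>. LI i \<alpha> \<in> lab' v)"
    proof (intro ballI impI)
      fix v assume v: "v \<in> g ` N" "LC \<in> lab' v"
      then obtain w where w: "w \<in> N" "v = g w" by blast
      then show "\<forall>i<node_dist p' v. \<exists>!\<alpha>. LI i \<alpha> \<in> lab' v"
        using li v ndg[OF w(1)] labg[OF w(1)] by simp
    qed
  qed
  have setR: "{v \<in> g ` N. LR \<in> lab' v} = g ` {v \<in> N. LR \<in> lab v}" using labg by auto
  have setC: "{v \<in> g ` N. LC \<in> lab' v} = g ` {v \<in> N. LC \<in> lab v}" using labg by auto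
  have b1: "bij_betw (g \<circ> \<rho>) R {v \<in> g ` N. LR \<in> lab' v}"
    unfolding setR
  proof (rule bij_betw_trans[OF rho])
    show "bij_betw g {v \<in> N. LR \<in> lab v} (g ` {v \<in> N. LR \<in> lab v})"
      by (rule inj_on_imp_bij_betw, rule inj_on_subset[OF g]) auto
  qed
  have b2: "bij_betw (g \<circ> \<gamma>) C {v \<in> g ` N. LC \<in> lab' v}"
    unfolding setC
  proof (rule bij_betw_trans[OF gam])
    show "bij_betw g {v \<in> N. LC \<in> lab v} (g ` {v \<in> N. LC \<in> lab v})"
      by (rule inj_on_imp_bij_betw, rule inj_on_subset[OF g]) auto
  qed
  have e: "\<forall>r\<in>R. \<forall>c\<in>C. A r c = mt_entry p' lab' ((g \<circ> \<rho>) r) ((g \<circ> \<gamma>) c)"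
  proof (intro ballI)
    fix r c assume r: "r \<in> R" and c: "c \<in> C"
    have rN: "\<rho> r \<in> N" using rho r bij_betwE by blast
    have cN: "\<gamma> c \<in> N" using gam c bij_betwE by blast
    show "A r c = mt_entry p' lab' ((g \<circ> \<rho>) r) ((g \<circ> \<gamma>) c)"
      using ent r c unfolding mt_entry_def comp_def ancg[OF rN cN] ndg[OF rN] labg[OF cN] by simp
  qed
  show ?thesis
    by (rule exI[of _ "g ` N"], rule exI[of _ "g rt"], rule exI[of _ p'], rule exI[of _ lab'],
        rule exI[of _ "g \<circ> \<rho>"], rule exI[of _ "g \<circ> \<gamma>"]) (intro conjI MT b1 b2 e)
qed

theorem lemma11:
  fixes R :: "'r set" and C :: "'c set" and A :: "'r \<Rightarrow> 'c \<Rightarrow> 'a::field" and d :: nat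
  assumes "finite R" and "finite C"
    and "dual_td_le R C A d"
  shows "\<exists>(N :: nat set) rt p (lab :: nat \<Rightarrow> 'a mt_label set) \<rho> \<gamma>.
           matrix_tree (d + 3) N rt p lab
         \<and> bij_betw \<rho> R {v \<in> N. LR \<in> lab v}
         \<and> bij_betw \<gamma> C {v \<in> N. LC \<in> lab v}
         \<and> (\<forall>r\<in>R. \<forall>c\<in>C. A r c = mt_entry p lab (\<rho> r) (\<gamma> c))"
proof -
  from assms(3) obtain pF k where ef: "elimination_forest R C A pF"
    and dep: "forest_depth_le R pF k" and kd: "k + 1 \<le> d"
    unfolding dual_td_le_def by blast
  have rf: "rooted_forest R pF" and adj: "\<forall>r s. dual_adj R C A r s \<longrightarrow> anc pF r s \<or> anc pF s r"
    using ef unfolding elimination_forest_def by blast+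
  have closF: "\<forall>v\<in>R. \<forall>u. pF v = Some u \<longrightarrow> u \<in> R" and acF: "\<forall>v\<in>R. \<not> anc pF v v"
    using rf unfolding rooted_forest_def by blast+
  have ndk: "\<And>s. s \<in> R \<Longrightarrow> node_dist pF s \<le> k" using dep unfolding forest_depth_le_def by blast
  define nd where "nd = node_dist pF"
  define S where "S c = {r\<in>R. A r c \<noteq> 0}" for c
  define top where "top c = (if S c = {} then None else Some (SOME r. r \<in> S c \<and> (\<forall>s\<in>S c. nd s \<le> nd r)))" for c
  have top_prop: "r \<in> S c \<and> (\<forall>s\<in>S c. s = r \<or> anc pF s r)" if c: "c \<in> C" and tc: "top c = Some r" for c r
  proof -
    have ne: "S c \<noteq> {}" using tc unfolding top_def by (auto split: if_splits)
    have fin: "finite (S c)" using assms(1) unfolding S_def by auto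
    have "Max (nd ` S c) \<in> nd ` S c" using fin ne by simp
    then obtain r0 where r0: "r0 \<in> S c" "nd r0 = Max (nd ` S c)" by (metis imageE)
    have "r0 \<in> S c \<and> (\<forall>s\<in>S c. nd s \<le> nd r0)" using r0 fin by auto
    then have "(SOME r. r \<in> S c \<and> (\<forall>s\<in>S c. nd s \<le> nd r)) \<in> S c \<and>
       (\<forall>s\<in>S c. nd s \<le> nd (SOME r. r \<in> S c \<and> (\<forall>s\<in>S c. nd s \<le> nd r)))"
      by (rule someI)
    moreover have "r = (SOME r. r \<in> S c \<and> (\<forall>s\<in>S c. nd s \<le> nd r))"
      using tc ne unfolding top_def by auto
    ultimately have rr: "r \<in> S c \<and> (\<forall>s\<in>S c. nd s \<le> nd r)" by simp
    have "s = r \<or> anc pF s r" if s: "s \<in> S c" for s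
    proof (rule ccontr)
      assume nn: "\<not> (s = r \<or> anc pF s r)"
      have "dual_adj R C A s r" unfolding dual_adj_def using s rr c nn unfolding S_def by blast
      then have "anc pF r s" using adj nn by blast
      then have "nd r < nd s" using nd_less[OF rf] s unfolding nd_def S_def by blast
      then show False using rr s by auto
    qed
    then show ?thesis using rr by blast
  qed
  have topR: "r \<in> R" if "c \<in> C" "top c = Some r" for c r
    using top_prop[OF that] unfolding S_def by blast
  define q :: "('r + 'c) option \<Rightarrow> ('r + 'c) option option" where
    "q = (\<lambda>x. case x of None \<Rightarrow> None | Some (Inl r) \<Rightarrow> Some (map_option Inl (pF r))
               | Some (Inr c) \<Rightarrow> Some (map_option Inl (top c)))"
  have q0: "q None = None" and q1: "\<And>r. q (Some (Inl r)) = Some (map_option Inl (pF r))"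
    and q2: "\<And>c. q (Some (Inr c)) = Some (map_option Inl (top c))"
    by (simp_all add: q_def)
  define N where "N = insert None (Some ` (Inl ` R \<union> Inr ` C))"
  have A1': "x = None \<or> (\<exists>r. x = Some (Inl r) \<and> anc pF r s)"
    if "anc q x y" "y = Some (Inl s)" for x y s
    using that
  proof (induction arbitrary: s rule: anc_induct)
    case (base v)
    then show ?case
    proof (cases "pF s")
      case None then show ?thesis using base q1 by simp
    next
      case (Some r)
      then have "anc pF r s" by (subst anc_step) simp
      then show ?thesis using base q1 Some by auto
    qed
  next
    case (step v w)
    show ?case
    proof (cases "pF s")
      case None
      then have "w = None" using step q1 by simp
      then show ?thesis using step.hyps(2) anc_None[of q None x] q0 by simp
    next
      case (Some r')
      then have w: "w = Some (Inl r')" using step q1 by simp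
      have r's: "anc pF r' s" using Some by (subst anc_step) simp
      from step.IH[OF w] show ?thesis using anc_trans[OF _ r's] by blast
    qed
  qed
  have A1: "\<And>x s. anc q x (Some (Inl s)) \<Longrightarrow> x = None \<or> (\<exists>r. x = Some (Inl r) \<and> anc pF r s)"
    using A1' by blast
  have B1: "anc q (Some (Inl r)) (Some (Inl s))" if "anc pF r s" for r s
    using that
  proof (induction rule: anc_induct)
    case (base v)
    then show ?case by (subst anc_step) (simp add: q1)
  next
    case (step v w)
    then show ?case by (subst anc_step) (simp add: q1)
  qed
  have C1: "anc q None (Some (Inl s))" if "s \<in> R" for s
    using that
  proof (induction "nd s" arbitrary: s rule: less_induct)
    case less
    show ?case
    proof (cases "pF s")
      case None then show ?thesis by (subst anc_step) (simp add: q1)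
    next
      case (Some w)
      then have wR: "w \<in> R" using closF less.prems by blast
      have "anc pF w s" using Some by (subst anc_step) simp
      then have "nd w < nd s" using nd_less[OF rf less.prems] unfolding nd_def by blast
      then have "anc q None (Some (Inl w))" using less.hyps wR by blast
      then show ?thesis using Some by (subst anc_step) (simp add: q1)
    qed
  qed
  have rowanc: "anc q (Some (Inl r)) (Some (Inl s)) \<longleftrightarrow> anc pF r s" for r s
    using A1[of "Some (Inl r)" s] B1 by blast
  have colanc: "anc q x (Some (Inr c)) \<longleftrightarrow>
      (case top c of None \<Rightarrow> x = None | Some r \<Rightarrow> x = Some (Inl r) \<or> anc q x (Some (Inl r)))" for x c
    by (subst anc_step) (auto simp: q2 anc_None q0 split: option.splits)
  have financ: "finite {r. anc pF r s}" if "s \<in> R" for s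
  proof -
    have "{r. anc pF r s} \<subseteq> R" using anc_closed[OF closF _ that] by blast
    then show ?thesis using assms(1) finite_subset by blast
  qed
  have rowset: "{x. anc q x (Some (Inl s))} = insert None ((Some \<circ> Inl) ` {r. anc pF r s})"
    if "s \<in> R" for s
    using A1[of _ s] B1 C1[OF that] by auto
  have ndrow: "node_dist q (Some (Inl s)) = nd s + 1" if "s \<in> R" for s
  proof -
    have "inj (Some \<circ> Inl :: 'r \<Rightarrow> ('r + 'c) option)" by (simp add: inj_def)
    then have "card ((Some \<circ> Inl :: 'r \<Rightarrow> ('r + 'c) option) ` {r. anc pF r s}) = nd s"
      unfolding nd_def node_dist_def by (rule card_image[OF inj_on_subset]) auto
    moreover have "None \<notin> (Some \<circ> Inl :: 'r \<Rightarrow> ('r + 'c) option) ` {r. anc pF r s}" by auto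
    ultimately show ?thesis unfolding node_dist_def rowset[OF that]
      using financ[OF that] by simp
  qed
  have finrow: "finite {x. anc q x (Some (Inl s))}" if "s \<in> R" for s
    unfolding rowset[OF that] using financ[OF that] by simp
  have ndcol: "node_dist q (Some (Inr c)) \<le> k + 2" if c: "c \<in> C" for c
  proof (cases "top c")
    case None
    then have "{x. anc q x (Some (Inr c))} = {None}" using colanc by auto
    then show ?thesis unfolding node_dist_def by simp
  next
    case (Some r)
    then have rR: "r \<in> R" using topR c by blast
    have "{x. anc q x (Some (Inr c))} = insert (Some (Inl r)) {x. anc q x (Some (Inl r))}"
      using colanc[of _ c] Some by auto
    then have "node_dist q (Some (Inr c)) \<le> Suc (node_dist q (Some (Inl r)))"
      unfolding node_dist_def using finrow[OF rR] card_insert_le_m1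
      by (simp add: card_insert_if)
    then show ?thesis using ndrow[OF rR] ndk[OF rR] unfolding nd_def by simp
  qed
  have closq: "\<forall>v\<in>N. \<forall>u. q v = Some u \<longrightarrow> u \<in> N"
  proof (intro ballI allI impI)
    fix v u assume v: "v \<in> N" and u: "q v = Some u"
    show "u \<in> N"
    proof (cases v)
      case None then show ?thesis using u q0 by simp
    next
      case (Some x)
      show ?thesis
      proof (cases x)
        case (Inl r)
        then have "r \<in> R" using v Some N_def by auto
        then show ?thesis using u Some Inl q1 closF unfolding N_def by (cases "pF r") auto
      next
        case (Inr c)
        then have "c \<in> C" using v Some N_def by auto
        then show ?thesis using u Some Inr q2 topR unfolding N_def by (cases "top c") auto
      qed
    qed
  qed
  have notanc_col: "\<not> anc q (Some (Inr c')) v" if "v \<in> N" for c' v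
  proof
    assume h: "anc q (Some (Inr c')) v"
    show False
    proof (cases v)
      case None then show ?thesis using h q0 anc_None[of q None "Some (Inr c')"] by simp
    next
      case (Some x)
      show ?thesis
      proof (cases x)
        case (Inl r) then show ?thesis using h Some A1[of "Some (Inr c')" r] by simp
      next
        case (Inr c)
        have h2: "anc q (Some (Inr c')) (Some (Inr c))" using h Some Inr by simp
        show ?thesis
        proof (cases "top c")
          case None then show ?thesis using h2 colanc[of "Some (Inr c')" c] by simp
        next
          case (Some r)
          then have "anc q (Some (Inr c')) (Some (Inl r))" using h2 colanc[of "Some (Inr c')" c] by simp
          then show ?thesis using A1[of "Some (Inr c')" r] by simp
        qed
      qed
    qed
  qed
  have finN: "finite N" unfolding N_def using assms(1,2) by simp
  have acq: "\<forall>v\<in>N. \<not> anc q v v"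
  proof
    fix v assume v: "v \<in> N"
    show "\<not> anc q v v"
    proof (cases v)
      case None then show ?thesis using q0 anc_None[of q None None] by simp
    next
      case (Some x)
      show ?thesis
      proof (cases x)
        case (Inl r)
        then have "r \<in> R" using v Some N_def by auto
        then show ?thesis using Some Inl rowanc acF by simp
      next
        case (Inr c)
        then show ?thesis using notanc_col v Some by blast
      qed
    qed
  qed
  have rfq: "rooted_forest N q" unfolding rooted_forest_def using finN closq acq by blast
  define f where "f c i = (SOME \<alpha>. \<exists>r\<in>R. anc q (Some (Inl r)) (Some (Inr c))
      \<and> node_dist q (Some (Inl r)) = i \<and> \<alpha> = A r c)" for c i
  define lab :: "('r + 'c) option \<Rightarrow> 'a mt_label set" where
    "lab = (\<lambda>x. case x of None \<Rightarrow> {} | Some (Inl r) \<Rightarrow> {LR}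
       | Some (Inr c) \<Rightarrow> insert LC (range (\<lambda>i. LI i (f c i))))"
  have lab0: "lab None = {}" and lab1: "\<And>r. lab (Some (Inl r)) = {LR}"
    and lab2: "\<And>c. lab (Some (Inr c)) = insert LC (range (\<lambda>i. LI i (f c i)))"
    by (simp_all add: lab_def)
  have LIin: "LI i \<alpha> \<in> lab (Some (Inr c)) \<longleftrightarrow> \<alpha> = f c i" for i \<alpha> c
    unfolding lab2 by auto
  have MT: "matrix_tree (d + 3) N None q lab"
    unfolding matrix_tree_def
  proof (intro conjI)
    show "finite N" by (rule finN)
    show "None \<in> N" unfolding N_def by simp
    show "q None = None" by (rule q0)
    show "\<forall>v\<in>N. v \<noteq> None \<longrightarrow> (\<exists>u. q v = Some u \<and> u \<in> N)"
    proof (intro ballI impI)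
      fix v assume v: "v \<in> N" "v \<noteq> None"
      then obtain x where x: "v = Some x" by blast
      then obtain u where u: "q v = Some u" using q1 q2 by (cases x) auto
      then show "\<exists>u. q v = Some u \<and> u \<in> N" using closq v by blast
    qed
    show "\<forall>v\<in>N. \<not> anc q v v" by (rule acq)
    show "\<forall>v\<in>N. node_dist q v \<le> d + 3"
    proof
      fix v assume v: "v \<in> N"
      show "node_dist q v \<le> d + 3"
      proof (cases v)
        case None
        then have "{x. anc q x v} = {}" using q0 anc_None[of q None] by simp
        then show ?thesis unfolding node_dist_def by simp
      next
        case (Some x)
        show ?thesis
        proof (cases x)
          case (Inl r)
          then have "r \<in> R" using v Some N_def by auto
          then show ?thesis using Some Inl ndrow ndk kd unfolding nd_def by fastforce
        next
          case (Inr c)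
          then have "c \<in> C" using v Some N_def by auto
          then show ?thesis using Some Inr ndcol kd by fastforce
        qed
      qed
    qed
    show "\<forall>v\<in>N. LC \<in> lab v \<longrightarrow> is_leaf N q v"
    proof (intro ballI impI)
      fix v assume v: "v \<in> N" "LC \<in> lab v"
      then obtain c where c: "v = Some (Inr c)"
        using lab0 lab1 by (cases v; cases "the v") auto
      show "is_leaf N q v" unfolding is_leaf_def
      proof
        fix w assume "w \<in> N"
        show "q w \<noteq> Some v"
          using c q0 q1 q2 by (cases w; cases "the w") (auto split: option.splits)
      qed
    qed
    show "\<forall>v\<in>N. v \<noteq> None \<and> LC \<notin> lab v \<longrightarrow> LR \<in> lab v"
    proof (intro ballI impI)
      fix v assume v: "v \<in> N" "v \<noteq> None \<and> LC \<notin> lab v"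
      then show "LR \<in> lab v" using lab1 lab2 by (cases v; cases "the v") auto
    qed
    show "\<forall>v\<in>N. LC \<in> lab v \<longrightarrow> (\<forall>i<node_dist q v. \<exists>!\<alpha>. LI i \<alpha> \<in> lab v)"
    proof (intro ballI impI allI)
      fix v i assume v: "v \<in> N" "LC \<in> lab v"
      then obtain c where c: "v = Some (Inr c)"
        using lab0 lab1 by (cases v; cases "the v") auto
      show "\<exists>!\<alpha>. LI i \<alpha> \<in> lab v" unfolding c LIin by simp
    qed
  qed
  have setR: "{v \<in> N. LR \<in> lab v} = (Some \<circ> Inl) ` R"
  proof
    show "{v \<in> N. LR \<in> lab v} \<subseteq> (Some \<circ> Inl) ` R"
      unfolding N_def using lab0 lab2 by auto
    show "(Some \<circ> Inl) ` R \<subseteq> {v \<in> N. LR \<in> lab v}"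
      unfolding N_def using lab1 by auto
  qed
  have setC: "{v \<in> N. LC \<in> lab v} = (Some \<circ> Inr) ` C"
  proof
    show "{v \<in> N. LC \<in> lab v} \<subseteq> (Some \<circ> Inr) ` C"
      unfolding N_def using lab0 lab1 by auto
    show "(Some \<circ> Inr) ` C \<subseteq> {v \<in> N. LC \<in> lab v}"
      unfolding N_def using lab2 by auto
  qed
  have b1: "bij_betw (Some \<circ> Inl) R {v \<in> N. LR \<in> lab v}"
    unfolding setR by (rule inj_on_imp_bij_betw) (simp add: inj_on_def)
  have b2: "bij_betw (Some \<circ> Inr) C {v \<in> N. LC \<in> lab v}"
    unfolding setC by (rule inj_on_imp_bij_betw) (simp add: inj_on_def)
  have e: "\<forall>r\<in>R. \<forall>c\<in>C. A r c = mt_entry q lab ((Some \<circ> Inl) r) ((Some \<circ> Inr) c)"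
  proof (intro ballI)
    fix r c assume r: "r \<in> R" and c: "c \<in> C"
    show "A r c = mt_entry q lab ((Some \<circ> Inl) r) ((Some \<circ> Inr) c)"
    proof (cases "anc q (Some (Inl r)) (Some (Inr c))")
      case True
      define i where "i = node_dist q (Some (Inl r))"
      have th: "(THE \<alpha>. LI i \<alpha> \<in> lab (Some (Inr c))) = f c i" unfolding LIin by simp
      have ex: "\<exists>\<alpha>. \<exists>r\<in>R. anc q (Some (Inl r)) (Some (Inr c)) \<and> node_dist q (Some (Inl r)) = i \<and> \<alpha> = A r c"
        using r True i_def by blast
      have "\<exists>r'\<in>R. anc q (Some (Inl r')) (Some (Inr c)) \<and> node_dist q (Some (Inl r')) = i \<and> f c i = A r' c"
        unfolding f_def by (rule someI_ex[OF ex])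
      then obtain r' where r': "r' \<in> R" "anc q (Some (Inl r')) (Some (Inr c))"
        "node_dist q (Some (Inl r')) = i" "f c i = A r' c"
        by blast
      have rN: "Some (Inl r) \<in> N" and r'N: "Some (Inl r') \<in> N" using r r'(1) unfolding N_def by auto
      have "r' = r"
      proof (rule ccontr)
        assume "r' \<noteq> r"
        then have "anc q (Some (Inl r')) (Some (Inl r)) \<or> anc q (Some (Inl r)) (Some (Inl r'))"
          using anc_chain[OF r'(2) True] by simp
        then show False using nd_less[OF rfq rN] nd_less[OF rfq r'N] r'(3) i_def by force
      qed
      then show ?thesis using True th r'(4) unfolding mt_entry_def i_def by simp
    next
      case False
      have "A r c = 0"
      proof (rule ccontr)
        assume nz: "A r c \<noteq> 0"
        then have rS: "r \<in> S c" using r S_def by blast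
        then have "S c \<noteq> {}" by blast
        then obtain r0 where t: "top c = Some r0" unfolding top_def by simp
        then have "r = r0 \<or> anc pF r r0" using top_prop[OF c t] rS by blast
        then have "anc q (Some (Inl r)) (Some (Inr c))" using colanc t rowanc by auto
        then show False using False by blast
      qed
      then show ?thesis using False unfolding mt_entry_def by simp
    qed
  qed
  show ?thesis using relabel[OF MT b1 b2 e] by simp
qed

end
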